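(* The loose integration $(\mathcal A,U,\varphi)$ of $m$ symmetric qualitative formalisms $(\mathcal A_1,U,\varphi_1),\dots,(\mathcal A_m,U,\varphi_m)$ over the same set $U$ is a sequential formalism.
   Context: A finite non-associative algebra is a tuple $(\mathcal A,\cup,\neg,\emptyset,\mathcal B,\diamond,\overline{\cdot},e)$ where $(\mathcal A,\cup,\neg,\emptyset,\mathcal B)$ is a finite Boolean algebra (with $x\cap y=\neg(\neg x\cup\neg y)$) and for all $x,y,z$: $\overline{\overline x}=x$, $\overline{x\cup y}=\overline x\cup\overline y$, $\overline{x\diamond y}=\overline y\diamond\overline x$, $e\diamond x=x\diamond e=x$, $x\diamond(y\cup z)=(x\diamond y)\cup(x\diamond z)$, $(x\diamond y)\cap\overline z=\emptyset\iff(y\diamond z)\cap\overline x=\emptyset$. $\mathcal B$ is the universal relation; $r\subseteq r'$ means $r\cup r'=r'$; atoms are the basic relations; $\mathsf B$ denotes the set of atoms. A symmetric qualitative formalism is a triple $(\mathcal A,U,\varphi)$ with $\mathcal A$ a finite non-associative algebra, $U\neq\emptyset$ and $\varphi:\mathcal A\to2^{U\times U}$ with $\varphi(\emptyset)=\emptyset$, $\varphi(\overline r)=\varphi(r)^{-1}$, $\varphi(r\cap r')=\varphi(r)\cap\varphi(r')$, $\varphi(r\cup r')=\varphi(r)\cup\varphi(r')$, $\varphi(r\diamond r')\supseteq(\varphi(r)\circ\varphi(r'))\cap\varphi(\mathcal B)$. A projection operator from $\mathcal A$ to $\mathcal A'$ is a map $\Rsh$ with $\Rsh(r\cup r')=\Rsh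 r\cup\Rsh r'$ and $\Rsh\overline r=\overline{\Rsh r}$. A finite multi-algebra is a product $\mathcal A_1\times\cdots\times\mathcal A_m$ of finite non-associative algebras with projection operators $\Rsh_i^j:\mathcal A_i\to\mathcal A_j$ for all distinct $i,j$. Relations $R=(R_1,\dots,R_m)$; basic if all $R_i$ are atoms; universal relation $\mathcal B=(\mathcal B_1,\dots,\mathcal B_m)$; operations and $\subseteq$ componentwise; $B\in R$ means $B$ basic, $B\subseteq R$. The projection closure $\Rsh R$: repeatedly replace $R_j$ by $R_j\cap\Rsh_i^jR_i$ until a fixed point. A sequential formalism is $(\mathcal A,U,\varphi)$ with $\mathcal A$ a finite multi-algebra, $U\ne\emptyset$, $\varphi:\mathcal A\to 2^{U\times U}$ satisfying $\varphi(\Rsh R)=\varphi(R)$, $\varphi(\overline R)=\varphi(R)^{-1}$, $\varphi((\emptyset,\dots,\emptyset))=\emptyset$, $\varphi(R\diamond R')\supseteq(\varphi(R)\circ\varphi(R'))\cap\varphi(\mathcal B)$, $\varphi(R\cap R')=\varphi(R)\cap\varphi(R')$, $\varphi(R)=\bigcup_{B\in R}\varphi(B)$. The loose integration of $(\mathcal A_1,U,\varphi_1),\dots,(\mathcal A_m,U,\varphi_m)$ is $(\mathcal A,U,\varphi)$ where $\mathcal A$ is the multi-algebra $\mathcal A_1\times\cdots\times\mathcal A_m$ with projections defined on atoms $b\in\mathsf B_i$ by $\Rsh_i^jb=\bigcup\{b'\in\mathsf B_j:\varphi_i(b)\cap\varphi_j(b')\neq\emptyset\}$ (extended to all relations by union),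 and $\varphi(R)=\bigcap_i\varphi_i(R_i)$. *)

theory Defs
  imports "HOL-Library.FuncSet"
begin

record 'a na_alg =
  na_carrier :: "'a set"
  na_join :: "'a \<Rightarrow> 'a \<Rightarrow> 'a"
  na_neg  :: "'a \<Rightarrow> 'a"
  na_bot  :: 'a
  na_top  :: 'a
  na_comp :: "'a \<Rightarrow> 'a \<Rightarrow> 'a"      (* weak composition diamond *)
  na_conv :: "'a \<Rightarrow> 'a"
  na_id   :: 'a

definition na_meet :: "'a na_alg \<Rightarrow> 'a \<Rightarrow> 'a \<Rightarrow> 'a" where
  "na_meet A x y = na_neg A (na_join A (na_neg A x) (na_neg A y))"

definition na_leq :: "'a na_alg \<Rightarrow> 'a \<Rightarrow> 'a \<Rightarrow> bool" where
  "na_leq A x y \<longleftrightarrow> na_join A x y = y"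

definition na_atoms :: "'a na_alg \<Rightarrow> 'a set" where
  "na_atoms A = {x \<in> na_carrier A. x \<noteq> na_bot A \<and>
       (\<forall>y \<in> na_carrier A. na_leq A y x \<longrightarrow> y = na_bot A \<or> y = x)}"

definition na_Join :: "'a na_alg \<Rightarrow> 'a set \<Rightarrow> 'a" where
  "na_Join A S = (THE x. x \<in> na_carrier A \<and> (\<forall>s\<in>S. na_leq A s x) \<and>
       (\<forall>y\<in>na_carrier A. (\<forall>s\<in>S. na_leq A s y) \<longrightarrow> na_leq A x y))"

definition boolean_alg :: "'a na_alg \<Rightarrow> bool" where
  "boolean_alg A \<longleftrightarrow>
     na_bot A \<in> na_carrier A \<and> na_top A \<in> na_carrier A \<and>
     (\<forall>x\<in>na_carrier A. \<forall>y\<in>na_carrier A. na_join A x y \<in> na_carrier A) \<and>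
     (\<forall>x\<in>na_carrier A. na_neg A x \<in> na_carrier A) \<and>
     (\<forall>x\<in>na_carrier A. \<forall>y\<in>na_carrier A. \<forall>z\<in>na_carrier A.
        na_join A x y = na_join A y x \<and>
        na_meet A x y = na_meet A y x \<and>
        na_join A (na_join A x y) z = na_join A x (na_join A y z) \<and>
        na_meet A (na_meet A x y) z = na_meet A x (na_meet A y z) \<and>
        na_join A x (na_meet A x y) = x \<and>
        na_meet A x (na_join A x y) = x \<and>
        na_join A x (na_meet A y z) = na_meet A (na_join A x y) (na_join A x z) \<and>
        na_meet A x (na_join A y z) = na_join A (na_meet A x y) (na_meet A x z) \<and>
        na_join A x (na_neg A x) = na_top A \<and>
        na_meet A x (na_neg A x) = na_bot A \<and>
        na_join A x (na_bot A) = x \<and>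
        na_meet A x (na_top A) = x)"

definition finite_na_algebra :: "'a na_alg \<Rightarrow> bool" where
  "finite_na_algebra A \<longleftrightarrow>
     finite (na_carrier A) \<and> boolean_alg A \<and>
     na_id A \<in> na_carrier A \<and>
     (\<forall>x\<in>na_carrier A. na_conv A x \<in> na_carrier A) \<and>
     (\<forall>x\<in>na_carrier A. \<forall>y\<in>na_carrier A. na_comp A x y \<in> na_carrier A) \<and>
     (\<forall>x\<in>na_carrier A. \<forall>y\<in>na_carrier A. \<forall>z\<in>na_carrier A.
        na_conv A (na_conv A x) = x \<and>
        na_conv A (na_join A x y) = na_join A (na_conv A x) (na_conv A y) \<and>
        na_conv A (na_comp A x y) = na_comp A (na_conv A y) (na_conv A x) \<and>
        na_comp A (na_id A) x = x \<and> na_comp A x (na_id A) = x \<and>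
        na_comp A x (na_join A y z) = na_join A (na_comp A x y) (na_comp A x z) \<and>
        (na_meet A (na_comp A x y) (na_conv A z) = na_bot A \<longleftrightarrow>
         na_meet A (na_comp A y z) (na_conv A x) = na_bot A))"

definition sym_qual_formalism :: "'a na_alg \<Rightarrow> 'u set \<Rightarrow> ('a \<Rightarrow> ('u \<times> 'u) set) \<Rightarrow> bool" where
  "sym_qual_formalism A U \<phi> \<longleftrightarrow>
     finite_na_algebra A \<and> U \<noteq> {} \<and>
     (\<forall>r\<in>na_carrier A. \<phi> r \<subseteq> U \<times> U) \<and>
     \<phi> (na_bot A) = {} \<and>
     (\<forall>r\<in>na_carrier A. \<phi> (na_conv A r) = (\<phi> r)\<inverse>) \<and>
     (\<forall>r\<in>na_carrier A. \<forall>r'\<in>na_carrier A.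
        \<phi> (na_meet A r r') = \<phi> r \<inter> \<phi> r' \<and>
        \<phi> (na_join A r r') = \<phi> r \<union> \<phi> r' \<and>
        \<phi> (na_comp A r r') \<supseteq> (\<phi> r O \<phi> r') \<inter> \<phi> (na_top A))"

definition projection_op :: "'a na_alg \<Rightarrow> 'a na_alg \<Rightarrow> ('a \<Rightarrow> 'a) \<Rightarrow> bool" where
  "projection_op A A' P \<longleftrightarrow>
     (\<forall>r\<in>na_carrier A. P r \<in> na_carrier A') \<and>
     (\<forall>r\<in>na_carrier A. \<forall>r'\<in>na_carrier A.
        P (na_join A r r') = na_join A' (P r) (P r')) \<and>
     (\<forall>r\<in>na_carrier A. P (na_conv A r) = na_conv A' (P r))"

definition multi_algebra :: "nat \<Rightarrow> (nat \<Rightarrow> 'a na_alg) \<Rightarrow> (nat \<Rightarrow> nat \<Rightarrow> 'a \<Rightarrow> 'a) \<Rightarrow> bool" where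
  "multi_algebra m As P \<longleftrightarrow>
     (\<forall>i<m. finite_na_algebra (As i)) \<and>
     (\<forall>i<m. \<forall>j<m. i \<noteq> j \<longrightarrow> projection_op (As i) (As j) (P i j))"

definition m_rels :: "nat \<Rightarrow> (nat \<Rightarrow> 'a na_alg) \<Rightarrow> (nat \<Rightarrow> 'a) set" where
  "m_rels m As = PiE {..<m} (\<lambda>i. na_carrier (As i))"

definition m_meet :: "nat \<Rightarrow> (nat \<Rightarrow> 'a na_alg) \<Rightarrow> (nat \<Rightarrow> 'a) \<Rightarrow> (nat \<Rightarrow> 'a) \<Rightarrow> (nat \<Rightarrow> 'a)" where
  "m_meet m As R R' = restrict (\<lambda>i. na_meet (As i) (R i) (R' i)) {..<m}"

definition m_comp :: "nat \<Rightarrow> (nat \<Rightarrow> 'a na_alg) \<Rightarrow> (nat \<Rightarrow> 'a) \<Rightarrow> (nat \<Rightarrow> 'a) \<Rightarrow> (nat \<Rightarrow> 'a)" where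
  "m_comp m As R R' = restrict (\<lambda>i. na_comp (As i) (R i) (R' i)) {..<m}"

definition m_conv :: "nat \<Rightarrow> (nat \<Rightarrow> 'a na_alg) \<Rightarrow> (nat \<Rightarrow> 'a) \<Rightarrow> (nat \<Rightarrow> 'a)" where
  "m_conv m As R = restrict (\<lambda>i. na_conv (As i) (R i)) {..<m}"

definition m_bot :: "nat \<Rightarrow> (nat \<Rightarrow> 'a na_alg) \<Rightarrow> (nat \<Rightarrow> 'a)" where
  "m_bot m As = restrict (\<lambda>i. na_bot (As i)) {..<m}"

definition m_top :: "nat \<Rightarrow> (nat \<Rightarrow> 'a na_alg) \<Rightarrow> (nat \<Rightarrow> 'a)" where
  "m_top m As = restrict (\<lambda>i. na_top (As i)) {..<m}"

definition m_leq :: "nat \<Rightarrow> (nat \<Rightarrow> 'a na_alg) \<Rightarrow> (nat \<Rightarrow> 'a) \<Rightarrow> (nat \<Rightarrow> 'a) \<Rightarrow> bool" where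
  "m_leq m As R R' \<longleftrightarrow> (\<forall>i<m. na_leq (As i) (R i) (R' i))"

definition m_basic :: "nat \<Rightarrow> (nat \<Rightarrow> 'a na_alg) \<Rightarrow> (nat \<Rightarrow> 'a) \<Rightarrow> bool" where
  "m_basic m As B \<longleftrightarrow> B \<in> m_rels m As \<and> (\<forall>i<m. B i \<in> na_atoms (As i))"

definition proj_step :: "nat \<Rightarrow> (nat \<Rightarrow> 'a na_alg) \<Rightarrow> (nat \<Rightarrow> nat \<Rightarrow> 'a \<Rightarrow> 'a)
    \<Rightarrow> (nat \<Rightarrow> 'a) \<Rightarrow> (nat \<Rightarrow> 'a) \<Rightarrow> bool" where
  "proj_step m As P R S \<longleftrightarrow>
     (\<exists>i<m. \<exists>j<m. i \<noteq> j \<and> S = R(j := na_meet (As j) (R j) (P i j (R i))))"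

definition proj_fixed :: "nat \<Rightarrow> (nat \<Rightarrow> 'a na_alg) \<Rightarrow> (nat \<Rightarrow> nat \<Rightarrow> 'a \<Rightarrow> 'a)
    \<Rightarrow> (nat \<Rightarrow> 'a) \<Rightarrow> bool" where
  "proj_fixed m As P R \<longleftrightarrow>
     (\<forall>i<m. \<forall>j<m. i \<noteq> j \<longrightarrow> na_meet (As j) (R j) (P i j (R i)) = R j)"

definition proj_closure :: "nat \<Rightarrow> (nat \<Rightarrow> 'a na_alg) \<Rightarrow> (nat \<Rightarrow> nat \<Rightarrow> 'a \<Rightarrow> 'a)
    \<Rightarrow> (nat \<Rightarrow> 'a) \<Rightarrow> (nat \<Rightarrow> 'a) \<Rightarrow> bool" where
  "proj_closure m As P R S \<longleftrightarrow> (proj_step m As P)\<^sup>*\<^sup>* R S \<and> proj_fixed m As P S"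

definition sequential_formalism :: "nat \<Rightarrow> (nat \<Rightarrow> 'a na_alg) \<Rightarrow> (nat \<Rightarrow> nat \<Rightarrow> 'a \<Rightarrow> 'a)
    \<Rightarrow> 'u set \<Rightarrow> ((nat \<Rightarrow> 'a) \<Rightarrow> ('u \<times> 'u) set) \<Rightarrow> bool" where
  "sequential_formalism m As P U \<phi> \<longleftrightarrow>
     multi_algebra m As P \<and> U \<noteq> {} \<and>
     (\<forall>R\<in>m_rels m As. \<phi> R \<subseteq> U \<times> U) \<and>
     (\<forall>R\<in>m_rels m As. \<forall>S. proj_closure m As P R S \<longrightarrow> \<phi> S = \<phi> R) \<and>
     (\<forall>R\<in>m_rels m As. \<phi> (m_conv m As R) = (\<phi> R)\<inverse>) \<and>
     \<phi> (m_bot m As) = {} \<and>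
     (\<forall>R\<in>m_rels m As. \<forall>R'\<in>m_rels m As.
        \<phi> (m_comp m As R R') \<supseteq> (\<phi> R O \<phi> R') \<inter> \<phi> (m_top m As) \<and>
        \<phi> (m_meet m As R R') = \<phi> R \<inter> \<phi> R') \<and>
     (\<forall>R\<in>m_rels m As. \<phi> R = (\<Union>B\<in>{B. m_basic m As B \<and> m_leq m As B R}. \<phi> B))"

definition loose_proj_atom :: "(nat \<Rightarrow> 'a na_alg) \<Rightarrow> (nat \<Rightarrow> 'a \<Rightarrow> ('u \<times> 'u) set)
    \<Rightarrow> nat \<Rightarrow> nat \<Rightarrow> 'a \<Rightarrow> 'a" where
  "loose_proj_atom As \<phi>s i j b =
     na_Join (As j) {b' \<in> na_atoms (As j). \<phi>s i b \<inter> \<phi>s j b' \<noteq> {}}"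

definition loose_proj :: "(nat \<Rightarrow> 'a na_alg) \<Rightarrow> (nat \<Rightarrow> 'a \<Rightarrow> ('u \<times> 'u) set)
    \<Rightarrow> nat \<Rightarrow> nat \<Rightarrow> 'a \<Rightarrow> 'a" where
  "loose_proj As \<phi>s i j r =
     na_Join (As j) (loose_proj_atom As \<phi>s i j ` {b \<in> na_atoms (As i). na_leq (As i) b r})"

definition loose_phi :: "nat \<Rightarrow> (nat \<Rightarrow> 'a \<Rightarrow> ('u \<times> 'u) set) \<Rightarrow> (nat \<Rightarrow> 'a) \<Rightarrow> ('u \<times> 'u) set" where
  "loose_phi m \<phi>s R = (\<Inter>i\<in>{..<m}. \<phi>s i (R i))"

end

theory Submission
  imports Defs
begin


locale fba =
  fixes A :: "'a na_alg"
  assumes fna: "finite_na_algebra A"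
begin

abbreviation "C \<equiv> na_carrier A"
abbreviation "jn \<equiv> na_join A"
abbreviation "mt \<equiv> na_meet A"
abbreviation "ng \<equiv> na_neg A"
abbreviation "bt \<equiv> na_bot A"
abbreviation "tp \<equiv> na_top A"
abbreviation "cv \<equiv> na_conv A"
abbreviation "le \<equiv> na_leq A"
abbreviation "ats \<equiv> na_atoms A"

lemma fin: "finite C" using fna unfolding finite_na_algebra_def by blast

lemma BAall: "na_bot A \<in> C \<and> na_top A \<in> C \<and>
     (\<forall>x\<in>C. \<forall>y\<in>C. jn x y \<in> C) \<and>
     (\<forall>x\<in>C. ng x \<in> C) \<and>
     (\<forall>x\<in>C. \<forall>y\<in>C. \<forall>z\<in>C.
        jn x y = jn y x \<and>
        mt x y = mt y x \<and>
        jn (jn x y) z = jn x (jn y z) \<and>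
        mt (mt x y) z = mt x (mt y z) \<and>
        jn x (mt x y) = x \<and>
        mt x (jn x y) = x \<and>
        jn x (mt y z) = mt (jn x y) (jn x z) \<and>
        mt x (jn y z) = jn (mt x y) (mt x z) \<and>
        jn x (ng x) = tp \<and>
        mt x (ng x) = bt \<and>
        jn x bt = x \<and>
        mt x tp = x)"
  using fna unfolding finite_na_algebra_def boolean_alg_def by blast

lemma CVall: "(\<forall>x\<in>C. cv x \<in> C) \<and>
     (\<forall>x\<in>C. \<forall>y\<in>C. \<forall>z\<in>C.
        cv (cv x) = x \<and>
        cv (jn x y) = jn (cv x) (cv y))"
  using fna unfolding finite_na_algebra_def by blast

lemma bot_C[simp]: "bt \<in> C" and top_C[simp]: "tp \<in> C"
  using BAall by auto
lemma join_C[simp]: "x \<in> C \<Longrightarrow> y \<in> C \<Longrightarrow> jn x y \<in> C"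
  using BAall by auto
lemma neg_C[simp]: "x \<in> C \<Longrightarrow> ng x \<in> C"
  using BAall by auto
lemma meet_C[simp]: "x \<in> C \<Longrightarrow> y \<in> C \<Longrightarrow> mt x y \<in> C"
  unfolding na_meet_def by simp
lemma conv_C[simp]: "x \<in> C \<Longrightarrow> cv x \<in> C"
  using CVall by auto
lemma conv_conv[simp]: "x \<in> C \<Longrightarrow> cv (cv x) = x"
  using CVall by auto
lemma conv_join: "x \<in> C \<Longrightarrow> y \<in> C \<Longrightarrow> cv (jn x y) = jn (cv x) (cv y)"
  using CVall by auto

context
  fixes x y z
  assumes xyz: "x \<in> C" "y \<in> C" "z \<in> C"
begin
lemma jcomm: "jn x y = jn y x" using BAall xyz by blast
lemma mcomm: "mt x y = mt y x" using BAall xyz by blast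
lemma jassoc: "jn (jn x y) z = jn x (jn y z)" using BAall xyz by blast
lemma massoc: "mt (mt x y) z = mt x (mt y z)" using BAall xyz by blast
lemma jabs: "jn x (mt x y) = x" using BAall xyz by blast
lemma mabs: "mt x (jn x y) = x" using BAall xyz by blast
lemma mdist: "mt x (jn y z) = jn (mt x y) (mt x z)" using BAall xyz by blast
lemma jneg: "jn x (ng x) = tp" using BAall xyz by blast
lemma mneg: "mt x (ng x) = bt" using BAall xyz by blast
lemma jbot: "jn x bt = x" using BAall xyz by blast
lemma mtop: "mt x tp = x" using BAall xyz by blast
end

lemma jidem: "x \<in> C \<Longrightarrow> jn x x = x"
  by (metis jabs mabs join_C)

lemma le_refl: "x \<in> C \<Longrightarrow> le x x"
  by (simp add: na_leq_def jidem)

lemma le_trans: "x \<in> C \<Longrightarrow> y \<in> C \<Longrightarrow> z \<in> C \<Longrightarrow> le x y \<Longrightarrow> le y z \<Longrightarrow> le x z"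
  unfolding na_leq_def by (metis jassoc)

lemma le_antisym: "x \<in> C \<Longrightarrow> y \<in> C \<Longrightarrow> le x y \<Longrightarrow> le y x \<Longrightarrow> x = y"
  unfolding na_leq_def by (metis jcomm)

lemma le_join1: "x \<in> C \<Longrightarrow> y \<in> C \<Longrightarrow> le x (jn x y)"
  unfolding na_leq_def by (metis jassoc jidem)

lemma le_join2: "x \<in> C \<Longrightarrow> y \<in> C \<Longrightarrow> le y (jn x y)"
  by (metis jcomm le_join1)

lemma join_least: "x \<in> C \<Longrightarrow> y \<in> C \<Longrightarrow> z \<in> C \<Longrightarrow> le x z \<Longrightarrow> le y z \<Longrightarrow> le (jn x y) z"
  unfolding na_leq_def by (metis jassoc)

lemma bot_le: "x \<in> C \<Longrightarrow> le bt x"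
  unfolding na_leq_def by (metis jcomm jbot bot_C)

lemma le_iff_meet: "x \<in> C \<Longrightarrow> y \<in> C \<Longrightarrow> le x y \<longleftrightarrow> mt x y = x"
  unfolding na_leq_def by (metis jabs mabs jcomm mcomm)

lemma meet_le1: "x \<in> C \<Longrightarrow> y \<in> C \<Longrightarrow> le (mt x y) x"
  unfolding na_leq_def by (metis jabs jcomm meet_C)

lemma meet_le2: "x \<in> C \<Longrightarrow> y \<in> C \<Longrightarrow> le (mt x y) y"
  by (metis mcomm meet_le1)

lemma meet_greatest: "x \<in> C \<Longrightarrow> y \<in> C \<Longrightarrow> z \<in> C \<Longrightarrow> le z x \<Longrightarrow> le z y \<Longrightarrow> le z (mt x y)"
  by (metis le_iff_meet massoc meet_C)

lemma disj_le_neg: assumes "s \<in> C" "a \<in> C" "mt s a = bt" shows "le s (ng a)"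
proof -
  have "s = mt s (jn a (ng a))" using assms by (simp add: jneg mtop)
  also have "\<dots> = jn (mt s a) (mt s (ng a))" using assms by (simp add: mdist)
  also have "\<dots> = mt s (ng a)" using assms by (metis jbot jcomm meet_C neg_C bot_C)
  finally show ?thesis using assms by (metis le_iff_meet neg_C)
qed

lemma meetneg_le: assumes "x \<in> C" "y \<in> C" "mt x (ng y) = bt" shows "le x y"
proof -
  have "x = mt x (jn y (ng y))" using assms by (simp add: jneg mtop)
  also have "\<dots> = jn (mt x y) (mt x (ng y))" using assms by (simp add: mdist)
  also have "\<dots> = mt x y" using assms by (metis jbot meet_C)
  finally show ?thesis using assms by (metis le_iff_meet)
qed

lemma le_bot: "x \<in> C \<Longrightarrow> le x bt \<Longrightarrow> x = bt"
  by (metis bot_C bot_le le_antisym)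

lemma atomD: assumes "a \<in> ats" shows "a \<in> C" "a \<noteq> bt" "\<And>y. y \<in> C \<Longrightarrow> le y a \<Longrightarrow> y = bt \<or> y = a"
  using assms unfolding na_atoms_def by auto

lemma atom_le_atom: "a \<in> ats \<Longrightarrow> c \<in> ats \<Longrightarrow> le c a \<longleftrightarrow> c = a"
  by (metis atomD le_refl)

lemma atom_meet: assumes "a \<in> ats" "y \<in> C" shows "le a y \<or> mt a y = bt"
proof -
  have "le (mt a y) a" using assms atomD meet_le1 by blast
  then have "mt a y = bt \<or> mt a y = a" using assms atomD(3)[OF assms(1)] atomD(1) by simp
  then show ?thesis using assms atomD(1) le_iff_meet by blast
qed

lemma atom_not_le_bot: assumes "a \<in> ats" "le a bt" shows False
  using assms atomD le_bot by blast

lemma atom_exists: assumes "x \<in> C" "x \<noteq> bt" shows "\<exists>a\<in>ats. le a x"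
proof -
  let ?P = "\<lambda>y. y \<in> C \<and> y \<noteq> bt \<and> le y x"
  let ?m = "\<lambda>y. card {z \<in> C. le z y}"
  have "?P x" using assms le_refl by blast
  then obtain y where y: "?P y" and ymin: "\<And>w. ?P w \<Longrightarrow> ?m y \<le> ?m w"
    using ex_has_least_nat[of ?P x ?m] by blast
  have "y \<in> ats"
    unfolding na_atoms_def
  proof (intro CollectI conjI ballI impI)
    fix w assume w: "w \<in> C" "le w y"
    show "w = bt \<or> w = y"
    proof (rule ccontr)
      assume nw: "\<not> (w = bt \<or> w = y)"
      have "?P w" using w nw y le_trans assms by blast
      have sub: "{z \<in> C. le z w} \<subset> {z \<in> C. le z y}"
      proof
        show "{z \<in> C. le z w} \<subseteq> {z \<in> C. le z y}" using w y le_trans by blast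
        have "y \<notin> {z \<in> C. le z w}" using nw w y le_antisym by blast
        moreover have "y \<in> {z \<in> C. le z y}" using y le_refl by blast
        ultimately show "{z \<in> C. le z w} \<noteq> {z \<in> C. le z y}" by blast
      qed
      have "?m w < ?m y" by (rule psubset_card_mono) (use fin sub in auto)
      with ymin[OF \<open>?P w\<close>] show False by simp
    qed
  qed (use y in auto)
  then show ?thesis using y by blast
qed

lemma le_by_atoms: assumes "x \<in> C" "y \<in> C" "\<And>a. a \<in> ats \<Longrightarrow> le a x \<Longrightarrow> le a y"
  shows "le x y"
proof (rule meetneg_le[OF assms(1,2)], rule ccontr)
  assume "mt x (ng y) \<noteq> bt"
  moreover have "mt x (ng y) \<in> C" using assms by simp
  ultimately obtain a where a: "a \<in> ats" "le a (mt x (ng y))" using atom_exists by blast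
  have aC: "a \<in> C" using a atomD by blast
  have mC: "mt x (ng y) \<in> C" and nC: "ng y \<in> C" using assms by simp_all
  have "le a x" by (rule le_trans[OF aC mC assms(1) a(2) meet_le1[OF assms(1) nC]])
  then have "le a y" using assms a by blast
  moreover have "le a (ng y)" by (rule le_trans[OF aC mC nC a(2) meet_le2[OF assms(1) nC]])
  ultimately have "le a (mt y (ng y))" using meet_greatest aC assms by simp
  then show False using a assms mneg atom_not_le_bot by simp
qed

lemma eq_by_atoms: assumes "x \<in> C" "y \<in> C" "\<And>a. a \<in> ats \<Longrightarrow> le a x \<longleftrightarrow> le a y"
  shows "x = y"
proof -
  have "le x y" by (rule le_by_atoms) (use assms in auto)
  moreover have "le y x" by (rule le_by_atoms) (use assms in auto)
  ultimately show ?thesis using le_antisym assms(1,2) by blast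
qed

lemma atom_le_join: assumes "a \<in> ats" "x \<in> C" "y \<in> C"
  shows "le a (jn x y) \<longleftrightarrow> le a x \<or> le a y"
proof
  have aC: "a \<in> C" using assms atomD by blast
  assume h: "le a (jn x y)"
  show "le a x \<or> le a y"
  proof (rule ccontr)
    assume "\<not> (le a x \<or> le a y)"
    then have "mt a x = bt" "mt a y = bt" using atom_meet assms by blast+
    moreover have "a = mt a (jn x y)" using h aC assms le_iff_meet by simp
    ultimately have "a = bt" using mdist[OF aC assms(2,3)] jbot[OF bot_C bot_C bot_C] by simp
    then show False using assms atomD by blast
  qed
next
  assume "le a x \<or> le a y"
  moreover have aC: "a \<in> C" using assms atomD by blast
  moreover have "jn x y \<in> C" using assms by simp
  ultimately show "le a (jn x y)"
    using le_trans[OF aC assms(2) _ _ le_join1[OF assms(2,3)]]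
      le_trans[OF aC assms(3) _ _ le_join2[OF assms(2,3)]] by blast
qed

lemma Join_ex: assumes "S \<subseteq> C"
  shows "\<exists>x. x \<in> C \<and> (\<forall>s\<in>S. le s x) \<and> (\<forall>y\<in>C. (\<forall>s\<in>S. le s y) \<longrightarrow> le x y)"
proof -
  have "finite S" using assms fin finite_subset by blast
  then show ?thesis using assms
  proof (induction S rule: finite_induct)
    case empty
    then show ?case using bot_le bot_C by blast
  next
    case (insert s S)
    then obtain x where x: "x \<in> C" "\<forall>s\<in>S. le s x" "\<forall>y\<in>C. (\<forall>s\<in>S. le s y) \<longrightarrow> le x y" by auto
    have sC: "s \<in> C" using insert by auto
    have jC: "jn s x \<in> C" using sC x by simp
    have ub: "\<forall>t\<in>insert s S. le t (jn s x)"
    proof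
      fix t assume "t \<in> insert s S"
      then show "le t (jn s x)"
      proof
        assume "t = s" then show ?thesis using le_join1[OF sC x(1)] by simp
      next
        assume tS: "t \<in> S"
        then have tC: "t \<in> C" using insert.prems by auto
        show ?thesis using le_trans[OF tC x(1) jC _ le_join2[OF sC x(1)]] x(2) tS by blast
      qed
    qed
    have lst: "\<forall>y\<in>C. (\<forall>t\<in>insert s S. le t y) \<longrightarrow> le (jn s x) y"
    proof (intro ballI impI)
      fix y assume yC: "y \<in> C" and h: "\<forall>t\<in>insert s S. le t y"
      have "le x y" using x(3) yC h by blast
      moreover have "le s y" using h by blast
      ultimately show "le (jn s x) y" using join_least[OF sC x(1) yC] by blast
    qed
    show ?case using jC ub lst by blast
  qed
qed

lemma Join_props: assumes "S \<subseteq> C"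
  shows "na_Join A S \<in> C" "\<And>s. s \<in> S \<Longrightarrow> le s (na_Join A S)"
    "\<And>y. y \<in> C \<Longrightarrow> (\<And>s. s \<in> S \<Longrightarrow> le s y) \<Longrightarrow> le (na_Join A S) y"
proof -
  let ?Q = "\<lambda>x. x \<in> C \<and> (\<forall>s\<in>S. le s x) \<and> (\<forall>y\<in>C. (\<forall>s\<in>S. le s y) \<longrightarrow> le x y)"
  obtain x0 where x0: "?Q x0" using Join_ex[OF assms] by blast
  have "\<exists>!x. ?Q x"
  proof (rule ex1I[of _ x0])
    show "?Q x0" by (rule x0)
    fix x assume "?Q x"
    then show "x = x0" using x0 le_antisym by blast
  qed
  then have "?Q (na_Join A S)" unfolding na_Join_def by (rule theI')
  then show "na_Join A S \<in> C" "\<And>s. s \<in> S \<Longrightarrow> le s (na_Join A S)"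
    "\<And>y. y \<in> C \<Longrightarrow> (\<And>s. s \<in> S \<Longrightarrow> le s y) \<Longrightarrow> le (na_Join A S) y" by auto
qed

lemma atom_le_Join: assumes "a \<in> ats" "S \<subseteq> C"
  shows "le a (na_Join A S) \<longleftrightarrow> (\<exists>s\<in>S. le a s)"
proof
  have aC: "a \<in> C" using assms atomD by blast
  assume h: "le a (na_Join A S)"
  show "\<exists>s\<in>S. le a s"
  proof (rule ccontr)
    assume "\<not> (\<exists>s\<in>S. le a s)"
    then have "\<And>s. s \<in> S \<Longrightarrow> le s (ng a)"
    proof -
      fix s assume sS: "s \<in> S"
      then have sC: "s \<in> C" using assms by blast
      have "mt a s = bt" using atom_meet[OF assms(1) sC] sS \<open>\<not> (\<exists>s\<in>S. le a s)\<close> by blast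
      then have "mt s a = bt" using mcomm[OF aC sC sC] by simp
      then show "le s (ng a)" by (rule disj_le_neg[OF sC aC])
    qed
    then have "le (na_Join A S) (ng a)" using Join_props assms aC by simp
    then have "le a (ng a)" using le_trans[OF aC Join_props(1)[OF assms(2)] neg_C[OF aC] h] by blast
    then have "le a (mt a (ng a))" using meet_greatest le_refl aC by simp
    then show False using mneg aC atom_not_le_bot assms by simp
  qed
next
  assume "\<exists>s\<in>S. le a s"
  then obtain s where s: "s \<in> S" "le a s" by blast
  have aC: "a \<in> C" using assms atomD by blast
  have sC: "s \<in> C" using s assms by blast
  show "le a (na_Join A S)" using le_trans[OF aC sC Join_props(1)[OF assms(2)] s(2) Join_props(2)[OF assms(2) s(1)]] .
qed

lemma Join_atoms: assumes "x \<in> C" shows "na_Join A {a \<in> ats. le a x} = x"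
proof (rule eq_by_atoms)
  have sub: "{a \<in> ats. le a x} \<subseteq> C" using atomD by blast
  show "na_Join A {a \<in> ats. le a x} \<in> C" using Join_props sub by blast
  show "x \<in> C" by fact
  fix c assume c: "c \<in> ats"
  show "le c (na_Join A {a \<in> ats. le a x}) \<longleftrightarrow> le c x"
    using atom_le_Join[OF c sub] atom_le_atom c by auto
qed

lemma conv_mono: "x \<in> C \<Longrightarrow> y \<in> C \<Longrightarrow> le x y \<Longrightarrow> le (cv x) (cv y)"
  unfolding na_leq_def by (metis conv_join)

lemma conv_le_iff: "x \<in> C \<Longrightarrow> y \<in> C \<Longrightarrow> le (cv x) y \<longleftrightarrow> le x (cv y)"
  by (metis conv_mono conv_conv conv_C)

lemma conv_bot: "cv bt = bt"
proof -
  have "le bt (cv bt)" using bot_le by simp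
  then have "le (cv bt) bt" using conv_le_iff by simp
  then show ?thesis using le_bot by simp
qed

lemma conv_atom: assumes "a \<in> ats" shows "cv a \<in> ats"
  unfolding na_atoms_def
proof (intro CollectI conjI ballI impI)
  show "cv a \<in> C" using assms atomD by simp
  show "cv a \<noteq> bt" using assms atomD conv_bot by (metis conv_conv)
  fix y assume "y \<in> C" "le y (cv a)"
  then have "le (cv y) a" using conv_le_iff assms atomD by simp
  then have "cv y = bt \<or> cv y = a" using atomD assms \<open>y \<in> C\<close> by simp
  then show "y = bt \<or> y = cv a" using conv_bot \<open>y \<in> C\<close> by (metis conv_conv)
qed

end



locale sqf =
  fixes A :: "'a na_alg" and U :: "'u set" and \<phi> :: "'a \<Rightarrow> ('u \<times> 'u) set"
  assumes sqf: "sym_qual_formalism A U \<phi>"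

sublocale sqf \<subseteq> fba A
  using sqf by unfold_locales (simp add: sym_qual_formalism_def)

context sqf
begin

lemma PH: "finite_na_algebra A \<and> U \<noteq> {} \<and>
     (\<forall>r\<in>C. \<phi> r \<subseteq> U \<times> U) \<and>
     \<phi> bt = {} \<and>
     (\<forall>r\<in>C. \<phi> (cv r) = (\<phi> r)\<inverse>) \<and>
     (\<forall>r\<in>C. \<forall>r'\<in>C.
        \<phi> (mt r r') = \<phi> r \<inter> \<phi> r' \<and>
        \<phi> (jn r r') = \<phi> r \<union> \<phi> r' \<and>
        \<phi> (na_comp A r r') \<supseteq> (\<phi> r O \<phi> r') \<inter> \<phi> tp)"
  using sqf unfolding sym_qual_formalism_def .

lemma phi_sub: "r \<in> C \<Longrightarrow> \<phi> r \<subseteq> U \<times> U"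
  using PH by (elim conjE) (erule bspec)
lemma phi_bot: "\<phi> bt = {}"
  using PH by (elim conjE)
lemma phi_conv: "r \<in> C \<Longrightarrow> \<phi> (cv r) = (\<phi> r)\<inverse>"
  using PH by (elim conjE) (erule bspec)

context
  fixes r r' assumes rr: "r \<in> C" "r' \<in> C"
begin
lemma PH3: "\<phi> (mt r r') = \<phi> r \<inter> \<phi> r' \<and>
        \<phi> (jn r r') = \<phi> r \<union> \<phi> r' \<and>
        \<phi> (na_comp A r r') \<supseteq> (\<phi> r O \<phi> r') \<inter> \<phi> tp"
proof -
  have "\<forall>r\<in>C. \<forall>r'\<in>C.
        \<phi> (mt r r') = \<phi> r \<inter> \<phi> r' \<and>
        \<phi> (jn r r') = \<phi> r \<union> \<phi> r' \<and>
        \<phi> (na_comp A r r') \<supseteq> (\<phi> r O \<phi> r') \<inter> \<phi> tp"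
    using PH by (elim conjE)
  from bspec[OF bspec[OF this rr(1)] rr(2)] show ?thesis .
qed
lemma phi_meet: "\<phi> (mt r r') = \<phi> r \<inter> \<phi> r'"
  using PH3 by (elim conjE)
lemma phi_join: "\<phi> (jn r r') = \<phi> r \<union> \<phi> r'"
  using PH3 by (elim conjE)
lemma phi_comp: "(\<phi> r O \<phi> r') \<inter> \<phi> tp \<subseteq> \<phi> (na_comp A r r')"
  using PH3 by (elim conjE)
end

lemma phi_mono: "x \<in> C \<Longrightarrow> y \<in> C \<Longrightarrow> le x y \<Longrightarrow> \<phi> x \<subseteq> \<phi> y"
  unfolding na_leq_def by (metis phi_join Un_upper1)

lemma Join_empty: "na_Join A {} = bt"
proof -
  have e: "{} \<subseteq> C" by simp
  have "le (na_Join A {}) bt" by (rule Join_props(3)[OF e bot_C]) simp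
  moreover have "le bt (na_Join A {})" by (rule bot_le[OF Join_props(1)[OF e]])
  ultimately show ?thesis using le_antisym[OF Join_props(1)[OF e] bot_C] by blast
qed

lemma Join_insert: assumes "insert s S \<subseteq> C"
  shows "na_Join A (insert s S) = jn s (na_Join A S)"
proof -
  have sC: "s \<in> C" and SC: "S \<subseteq> C" using assms by auto
  note P1 = Join_props[OF assms] and P2 = Join_props[OF SC]
  have a: "le (na_Join A (insert s S)) (jn s (na_Join A S))"
  proof (rule P1(3))
    show "jn s (na_Join A S) \<in> C" using sC P2 by simp
    fix t assume "t \<in> insert s S"
    then show "le t (jn s (na_Join A S))"
    proof
      assume "t = s" then show ?thesis using le_join1[OF sC P2(1)] by simp
    next
      assume tS: "t \<in> S"
      then have tC: "t \<in> C" using SC by blast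
      show ?thesis by (rule le_trans[OF tC P2(1) _ P2(2)[OF tS] le_join2[OF sC P2(1)]]) (use sC P2 in simp)
    qed
  qed
  have b: "le (jn s (na_Join A S)) (na_Join A (insert s S))"
    apply (rule join_least)
    using sC P1 P2 by auto
  show ?thesis using a b le_antisym P1 P2 sC by simp
qed

lemma phi_Join: assumes "S \<subseteq> C" shows "\<phi> (na_Join A S) = (\<Union>s\<in>S. \<phi> s)"
proof -
  have "finite S" using assms fin finite_subset by blast
  then show ?thesis using assms
  proof (induction S rule: finite_induct)
    case empty
    then show ?case by (simp add: Join_empty phi_bot)
  next
    case (insert s S)
    have SC: "S \<subseteq> C" and sC: "s \<in> C" using insert.prems by auto
    have "\<phi> (na_Join A (insert s S)) = \<phi> (jn s (na_Join A S))"
      using Join_insert[OF insert.prems] by simp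
    also have "\<dots> = \<phi> s \<union> \<phi> (na_Join A S)"
      using phi_join[OF sC Join_props(1)[OF SC]] .
    also have "\<dots> = (\<Union>x\<in>insert s S. \<phi> x)" using insert.IH[OF SC] by simp
    finally show ?case .
  qed
qed

lemma phi_atoms: assumes "x \<in> C" shows "\<phi> x = (\<Union>a\<in>{a \<in> ats. le a x}. \<phi> a)"
proof -
  have sub: "{a \<in> ats. le a x} \<subseteq> C" using atomD by blast
  have "\<phi> (na_Join A {a \<in> ats. le a x}) = (\<Union>a\<in>{a \<in> ats. le a x}. \<phi> a)"
    by (rule phi_Join[OF sub])
  then show ?thesis unfolding Join_atoms[OF assms] .
qed

end

lemma lp_char:
  assumes si: "sym_qual_formalism (As i) U (\<phi>s i)" and sj: "sym_qual_formalism (As j) U (\<phi>s j)"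
    and c: "c \<in> na_atoms (As j)"
  shows "na_leq (As j) c (loose_proj As \<phi>s i j r) \<longleftrightarrow>
    (\<exists>b\<in>na_atoms (As i). na_leq (As i) b r \<and> \<phi>s i b \<inter> \<phi>s j c \<noteq> {})"
proof -
  interpret I: sqf "As i" U "\<phi>s i" by (rule sqf.intro[OF si])
  interpret J: sqf "As j" U "\<phi>s j" by (rule sqf.intro[OF sj])
  have subj: "{b' \<in> na_atoms (As j). \<phi>s i b \<inter> \<phi>s j b' \<noteq> {}} \<subseteq> na_carrier (As j)" for b
    using J.atomD by blast
  have PA_C: "loose_proj_atom As \<phi>s i j b \<in> na_carrier (As j)" for b
    unfolding loose_proj_atom_def using J.Join_props[OF subj] by blast
  have PA_char: "na_leq (As j) c (loose_proj_atom As \<phi>s i j b) \<longleftrightarrow> \<phi>s i b \<inter> \<phi>s j c \<noteq> {}" for b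
    unfolding loose_proj_atom_def using J.atom_le_Join[OF c subj] J.atom_le_atom c by auto
  have sub2: "loose_proj_atom As \<phi>s i j ` {b \<in> na_atoms (As i). na_leq (As i) b r} \<subseteq> na_carrier (As j)"
    using PA_C by blast
  show ?thesis
    unfolding loose_proj_def J.atom_le_Join[OF c sub2] using PA_char by auto
qed

lemma lp_C:
  assumes sj: "sym_qual_formalism (As j) U (\<phi>s j)"
  shows "loose_proj As \<phi>s i j r \<in> na_carrier (As j)"
proof -
  interpret J: sqf "As j" U "\<phi>s j" by (rule sqf.intro[OF sj])
  have subj: "{b' \<in> na_atoms (As j). \<phi>s i b \<inter> \<phi>s j b' \<noteq> {}} \<subseteq> na_carrier (As j)" for b
    using J.atomD by blast
  have PA_C: "loose_proj_atom As \<phi>s i j b \<in> na_carrier (As j)" for b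
    unfolding loose_proj_atom_def using J.Join_props[OF subj] by blast
  have sub2: "loose_proj_atom As \<phi>s i j ` {b \<in> na_atoms (As i). na_leq (As i) b r} \<subseteq> na_carrier (As j)"
    using PA_C by blast
  show ?thesis unfolding loose_proj_def using J.Join_props[OF sub2] by blast
qed

lemma lp_projop:
  assumes si: "sym_qual_formalism (As i) U (\<phi>s i)" and sj: "sym_qual_formalism (As j) U (\<phi>s j)"
  shows "projection_op (As i) (As j) (loose_proj As \<phi>s i j)"
proof -
  interpret I: sqf "As i" U "\<phi>s i" by (rule sqf.intro[OF si])
  interpret J: sqf "As j" U "\<phi>s j" by (rule sqf.intro[OF sj])
  note ch = lp_char[of As i U \<phi>s j, OF si sj] and PC = lp_C[of As j U \<phi>s, OF sj]
  show ?thesis unfolding projection_op_def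
  proof (intro conjI ballI)
    fix r assume "r \<in> na_carrier (As i)"
    show "loose_proj As \<phi>s i j r \<in> na_carrier (As j)" by (rule PC)
  next
    fix r r' assume r: "r \<in> na_carrier (As i)" and r': "r' \<in> na_carrier (As i)"
    show "loose_proj As \<phi>s i j (na_join (As i) r r') =
          na_join (As j) (loose_proj As \<phi>s i j r) (loose_proj As \<phi>s i j r')"
    proof (rule J.eq_by_atoms)
      fix c assume c: "c \<in> na_atoms (As j)"
      show "na_leq (As j) c (loose_proj As \<phi>s i j (na_join (As i) r r')) =
            na_leq (As j) c (na_join (As j) (loose_proj As \<phi>s i j r) (loose_proj As \<phi>s i j r'))"
        unfolding J.atom_le_join[OF c PC PC] ch[OF c] using I.atom_le_join r r' by blast
    qed (use PC in auto)
  next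
    fix r assume r: "r \<in> na_carrier (As i)"
    show "loose_proj As \<phi>s i j (na_conv (As i) r) = na_conv (As j) (loose_proj As \<phi>s i j r)"
    proof (rule J.eq_by_atoms)
      fix c assume c: "c \<in> na_atoms (As j)"
      have cC: "c \<in> na_carrier (As j)" using c J.atomD by blast
      have cc: "na_conv (As j) c \<in> na_atoms (As j)" using J.conv_atom c by blast
      have e1: "na_leq (As j) c (na_conv (As j) (loose_proj As \<phi>s i j r)) \<longleftrightarrow>
                na_leq (As j) (na_conv (As j) c) (loose_proj As \<phi>s i j r)"
        using J.conv_le_iff[OF cC PC] by simp
      show "na_leq (As j) c (loose_proj As \<phi>s i j (na_conv (As i) r)) =
            na_leq (As j) c (na_conv (As j) (loose_proj As \<phi>s i j r))"
        unfolding e1 ch[OF c] ch[OF cc]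
      proof
        assume "\<exists>b\<in>na_atoms (As i). na_leq (As i) b (na_conv (As i) r) \<and> \<phi>s i b \<inter> \<phi>s j c \<noteq> {}"
        then obtain b where b: "b \<in> na_atoms (As i)" "na_leq (As i) b (na_conv (As i) r)"
          "\<phi>s i b \<inter> \<phi>s j c \<noteq> {}" by blast
        have bC: "b \<in> na_carrier (As i)" using b I.atomD by blast
        have "na_conv (As i) b \<in> na_atoms (As i)" using I.conv_atom b by blast
        moreover have "na_leq (As i) (na_conv (As i) b) r" using I.conv_le_iff[OF bC r] b by simp
        moreover have "\<phi>s i (na_conv (As i) b) \<inter> \<phi>s j (na_conv (As j) c) \<noteq> {}"
          using I.phi_conv[OF bC] J.phi_conv[OF cC] b(3) by auto
        ultimately show "\<exists>b\<in>na_atoms (As i). na_leq (As i) b r \<and> \<phi>s i b \<inter> \<phi>s j (na_conv (As j) c) \<noteq> {}"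
          by blast
      next
        assume "\<exists>b\<in>na_atoms (As i). na_leq (As i) b r \<and> \<phi>s i b \<inter> \<phi>s j (na_conv (As j) c) \<noteq> {}"
        then obtain b where b: "b \<in> na_atoms (As i)" "na_leq (As i) b r"
          "\<phi>s i b \<inter> \<phi>s j (na_conv (As j) c) \<noteq> {}" by blast
        have bC: "b \<in> na_carrier (As i)" using b I.atomD by blast
        have "na_conv (As i) b \<in> na_atoms (As i)" using I.conv_atom b by blast
        moreover have "na_leq (As i) (na_conv (As i) b) (na_conv (As i) r)"
          using I.conv_mono[OF bC r] b by simp
        moreover have "\<phi>s i (na_conv (As i) b) \<inter> \<phi>s j c \<noteq> {}"
          using I.phi_conv[OF bC] J.phi_conv[OF cC] b(3) by auto
        ultimately show "\<exists>b\<in>na_atoms (As i). na_leq (As i) b (na_conv (As i) r) \<and> \<phi>s i b \<inter> \<phi>s j c \<noteq> {}"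
          by blast
      qed
    qed (use PC r in auto)
  qed
qed

lemma proj_sound:
  assumes si: "sym_qual_formalism (As i) U (\<phi>s i)" and sj: "sym_qual_formalism (As j) U (\<phi>s j)"
    and r: "r \<in> na_carrier (As i)" and q: "q \<in> na_carrier (As j)"
  shows "\<phi>s i r \<inter> \<phi>s j q \<subseteq> \<phi>s j (loose_proj As \<phi>s i j r)"
proof
  interpret I: sqf "As i" U "\<phi>s i" by (rule sqf.intro[OF si])
  interpret J: sqf "As j" U "\<phi>s j" by (rule sqf.intro[OF sj])
  fix p assume p: "p \<in> \<phi>s i r \<inter> \<phi>s j q"
  then obtain b where b: "b \<in> na_atoms (As i)" "na_leq (As i) b r" "p \<in> \<phi>s i b"
    using I.phi_atoms[OF r] by auto
  obtain c where c: "c \<in> na_atoms (As j)" "p \<in> \<phi>s j c"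
    using J.phi_atoms[OF q] p by auto
  have "na_leq (As j) c (loose_proj As \<phi>s i j r)"
    using lp_char[of As i U \<phi>s j, OF si sj c(1)] b c by blast
  then have "\<phi>s j c \<subseteq> \<phi>s j (loose_proj As \<phi>s i j r)"
    using J.phi_mono lp_C[of As j U \<phi>s, OF sj] J.atomD c by blast
  then show "p \<in> \<phi>s j (loose_proj As \<phi>s i j r)" using c by blast
qed



lemma step_pres:
  assumes S: "\<And>i. i < m \<Longrightarrow> sym_qual_formalism (As i) U (\<phi>s i)"
    and R: "R \<in> m_rels m As" and st: "proj_step m As (loose_proj As \<phi>s) R S"
  shows "S \<in> m_rels m As \<and> loose_phi m \<phi>s S = loose_phi m \<phi>s R"
proof -
  obtain i j where ij: "i < m" "j < m" "i \<noteq> j"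
    and Sdef: "S = R(j := na_meet (As j) (R j) (loose_proj As \<phi>s i j (R i)))"
    using st unfolding proj_step_def by blast
  interpret J: sqf "As j" U "\<phi>s j" by (rule sqf.intro[OF S[OF ij(2)]])
  have RC: "\<And>k. k < m \<Longrightarrow> R k \<in> na_carrier (As k)" using R unfolding m_rels_def by auto
  have PC: "loose_proj As \<phi>s i j (R i) \<in> na_carrier (As j)"
    by (rule lp_C[of As j U \<phi>s, OF S[OF ij(2)]])
  have Sj: "S j = na_meet (As j) (R j) (loose_proj As \<phi>s i j (R i))" using Sdef by simp
  have SjC: "S j \<in> na_carrier (As j)" using Sj RC[OF ij(2)] PC by simp
  have "S \<in> m_rels m As"
    using R SjC ij(2) unfolding m_rels_def Sdef by (auto simp: PiE_iff extensional_def)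
  moreover have "loose_phi m \<phi>s S = loose_phi m \<phi>s R"
  proof -
    have phSj: "\<phi>s j (S j) = \<phi>s j (R j) \<inter> \<phi>s j (loose_proj As \<phi>s i j (R i))"
      using Sj J.phi_meet[OF RC[OF ij(2)] PC] by simp
    have snd: "\<phi>s i (R i) \<inter> \<phi>s j (R j) \<subseteq> \<phi>s j (loose_proj As \<phi>s i j (R i))"
      by (rule proj_sound[OF S[OF ij(1)] S[OF ij(2)] RC[OF ij(1)] RC[OF ij(2)]])
    have other: "\<And>k. k \<noteq> j \<Longrightarrow> S k = R k" using Sdef by simp
    show ?thesis
    proof (rule set_eqI)
      fix p
      show "p \<in> loose_phi m \<phi>s S \<longleftrightarrow> p \<in> loose_phi m \<phi>s R"
        unfolding loose_phi_def
      proof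
        assume h: "p \<in> (\<Inter>k\<in>{..<m}. \<phi>s k (S k))"
        show "p \<in> (\<Inter>k\<in>{..<m}. \<phi>s k (R k))"
        proof
          fix k assume k: "k \<in> {..<m}"
          show "p \<in> \<phi>s k (R k)"
          proof (cases "k = j")
            case True then show ?thesis using h k phSj by auto
          next
            case False
            have "p \<in> \<phi>s k (S k)" using h k by blast
            then show ?thesis using other[OF False] by simp
          qed
        qed
      next
        assume h: "p \<in> (\<Inter>k\<in>{..<m}. \<phi>s k (R k))"
        show "p \<in> (\<Inter>k\<in>{..<m}. \<phi>s k (S k))"
        proof
          fix k assume k: "k \<in> {..<m}"
          show "p \<in> \<phi>s k (S k)"
          proof (cases "k = j")
            case True
            have "p \<in> \<phi>s i (R i)" "p \<in> \<phi>s j (R j)" using h ij by auto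
            then show ?thesis using True phSj snd by auto
          next
            case False
            have "p \<in> \<phi>s k (R k)" using h k by blast
            then show ?thesis using other[OF False] by simp
          qed
        qed
      qed
    qed
  qed
  ultimately show ?thesis by blast
qed

theorem proposition4p17:
  fixes m :: nat
    and As :: "nat \<Rightarrow> 'a na_alg"
    and U :: "'u set"
    and \<phi>s :: "nat \<Rightarrow> 'a \<Rightarrow> ('u \<times> 'u) set"
  assumes "m \<ge> 1"
    and "\<forall>i<m. sym_qual_formalism (As i) U (\<phi>s i)"
  shows "sequential_formalism m As (loose_proj As \<phi>s) U (loose_phi m \<phi>s)"
proof -
  have S: "\<And>i. i < m \<Longrightarrow> sym_qual_formalism (As i) U (\<phi>s i)" using assms(2) by blast
  have m0: "0 < m" using assms(1) by simp
  have RC: "\<And>R k. R \<in> m_rels m As \<Longrightarrow> k < m \<Longrightarrow> R k \<in> na_carrier (As k)"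
    unfolding m_rels_def by auto
  have lphi: "\<And>p R. p \<in> loose_phi m \<phi>s R \<longleftrightarrow> (\<forall>k<m. p \<in> \<phi>s k (R k))"
    unfolding loose_phi_def by auto
  have c1: "multi_algebra m As (loose_proj As \<phi>s)"
    unfolding multi_algebra_def
  proof (intro conjI allI impI)
    fix i assume "i < m"
    then show "finite_na_algebra (As i)" using S unfolding sym_qual_formalism_def by blast
  next
    fix i j assume "i < m" "j < m" "i \<noteq> j"
    then show "projection_op (As i) (As j) (loose_proj As \<phi>s i j)"
      using lp_projop[of As i U \<phi>s j] S by blast
  qed
  have c2: "U \<noteq> {}" using S[OF m0] unfolding sym_qual_formalism_def by blast
  have c3: "\<forall>R\<in>m_rels m As. loose_phi m \<phi>s R \<subseteq> U \<times> U"
  proof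
    fix R assume R: "R \<in> m_rels m As"
    interpret I: sqf "As 0" U "\<phi>s 0" by (rule sqf.intro[OF S[OF m0]])
    have "loose_phi m \<phi>s R \<subseteq> \<phi>s 0 (R 0)" using lphi m0 by blast
    also have "\<dots> \<subseteq> U \<times> U" using I.phi_sub RC[OF R m0] by blast
    finally show "loose_phi m \<phi>s R \<subseteq> U \<times> U" .
  qed
  have c4: "\<forall>R\<in>m_rels m As. \<forall>S'. proj_closure m As (loose_proj As \<phi>s) R S' \<longrightarrow>
      loose_phi m \<phi>s S' = loose_phi m \<phi>s R"
  proof (intro ballI allI impI)
    fix R S' assume R: "R \<in> m_rels m As" and pc: "proj_closure m As (loose_proj As \<phi>s) R S'"
    then have "(proj_step m As (loose_proj As \<phi>s))\<^sup>*\<^sup>* R S'" unfolding proj_closure_def by blast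
    then have "S' \<in> m_rels m As \<and> loose_phi m \<phi>s S' = loose_phi m \<phi>s R"
    proof (induction rule: rtranclp_induct)
      case base then show ?case using R by simp
    next
      case (step y z)
      then show ?case using step_pres[of m As U \<phi>s y z] S by metis
    qed
    then show "loose_phi m \<phi>s S' = loose_phi m \<phi>s R" by blast
  qed
  have c5: "\<forall>R\<in>m_rels m As. loose_phi m \<phi>s (m_conv m As R) = (loose_phi m \<phi>s R)\<inverse>"
  proof
    fix R assume R: "R \<in> m_rels m As"
    have "\<And>k. k < m \<Longrightarrow> \<phi>s k (m_conv m As R k) = (\<phi>s k (R k))\<inverse>"
    proof -
      fix k assume k: "k < m"
      interpret K: sqf "As k" U "\<phi>s k" by (rule sqf.intro[OF S[OF k]])
      show "\<phi>s k (m_conv m As R k) = (\<phi>s k (R k))\<inverse>"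
        using K.phi_conv[OF RC[OF R k]] k unfolding m_conv_def by simp
    qed
    then show "loose_phi m \<phi>s (m_conv m As R) = (loose_phi m \<phi>s R)\<inverse>"
      unfolding loose_phi_def by auto
  qed
  have c6: "loose_phi m \<phi>s (m_bot m As) = {}"
  proof -
    interpret I: sqf "As 0" U "\<phi>s 0" by (rule sqf.intro[OF S[OF m0]])
    show ?thesis
    proof (rule equals0I)
      fix p assume "p \<in> loose_phi m \<phi>s (m_bot m As)"
      then have "p \<in> \<phi>s 0 (m_bot m As 0)" using lphi m0 by blast
      then show False using I.phi_bot m0 by (simp add: m_bot_def)
    qed
  qed
  have c7: "\<forall>R\<in>m_rels m As. \<forall>R'\<in>m_rels m As.
        loose_phi m \<phi>s (m_comp m As R R') \<supseteq> (loose_phi m \<phi>s R O loose_phi m \<phi>s R') \<inter> loose_phi m \<phi>s (m_top m As) \<and>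
        loose_phi m \<phi>s (m_meet m As R R') = loose_phi m \<phi>s R \<inter> loose_phi m \<phi>s R'"
  proof (intro ballI conjI)
    fix R R' assume R: "R \<in> m_rels m As" and R': "R' \<in> m_rels m As"
    have K1: "\<And>k. k < m \<Longrightarrow> (\<phi>s k (R k) O \<phi>s k (R' k)) \<inter> \<phi>s k (na_top (As k)) \<subseteq> \<phi>s k (na_comp (As k) (R k) (R' k))"
    proof -
      fix k assume k: "k < m"
      interpret K: sqf "As k" U "\<phi>s k" by (rule sqf.intro[OF S[OF k]])
      show "(\<phi>s k (R k) O \<phi>s k (R' k)) \<inter> \<phi>s k (na_top (As k)) \<subseteq> \<phi>s k (na_comp (As k) (R k) (R' k))"
        by (rule K.phi_comp[OF RC[OF R k] RC[OF R' k]])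
    qed
    have K2: "\<And>k. k < m \<Longrightarrow> \<phi>s k (na_meet (As k) (R k) (R' k)) = \<phi>s k (R k) \<inter> \<phi>s k (R' k)"
    proof -
      fix k assume k: "k < m"
      interpret K: sqf "As k" U "\<phi>s k" by (rule sqf.intro[OF S[OF k]])
      show "\<phi>s k (na_meet (As k) (R k) (R' k)) = \<phi>s k (R k) \<inter> \<phi>s k (R' k)"
        by (rule K.phi_meet[OF RC[OF R k] RC[OF R' k]])
    qed
    show "(loose_phi m \<phi>s R O loose_phi m \<phi>s R') \<inter> loose_phi m \<phi>s (m_top m As) \<subseteq> loose_phi m \<phi>s (m_comp m As R R')"
    proof
      fix p assume p: "p \<in> (loose_phi m \<phi>s R O loose_phi m \<phi>s R') \<inter> loose_phi m \<phi>s (m_top m As)"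
      then obtain x y z where pxz: "p = (x, z)" and xy: "(x, y) \<in> loose_phi m \<phi>s R"
        and yz: "(y, z) \<in> loose_phi m \<phi>s R'" and top: "(x, z) \<in> loose_phi m \<phi>s (m_top m As)" by blast
      have "\<forall>k<m. (x, z) \<in> \<phi>s k (m_comp m As R R' k)"
      proof (intro allI impI)
        fix k assume k: "k < m"
        have "(x, y) \<in> \<phi>s k (R k)" "(y, z) \<in> \<phi>s k (R' k)" "(x, z) \<in> \<phi>s k (na_top (As k))"
          using xy yz top k lphi unfolding m_top_def by auto
        then have "(x, z) \<in> \<phi>s k (na_comp (As k) (R k) (R' k))" using K1[OF k] by blast
        then show "(x, z) \<in> \<phi>s k (m_comp m As R R' k)" using k unfolding m_comp_def by simp
      qed
      then show "p \<in> loose_phi m \<phi>s (m_comp m As R R')" using pxz lphi by blast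
    qed
    show "loose_phi m \<phi>s (m_meet m As R R') = loose_phi m \<phi>s R \<inter> loose_phi m \<phi>s R'"
      using K2 unfolding loose_phi_def m_meet_def by auto
  qed
  have c8: "\<forall>R\<in>m_rels m As. loose_phi m \<phi>s R =
      (\<Union>B\<in>{B. m_basic m As B \<and> m_leq m As B R}. loose_phi m \<phi>s B)"
  proof
    fix R assume R: "R \<in> m_rels m As"
    show "loose_phi m \<phi>s R = (\<Union>B\<in>{B. m_basic m As B \<and> m_leq m As B R}. loose_phi m \<phi>s B)"
    proof (rule set_eqI, rule iffI)
      fix p assume p: "p \<in> loose_phi m \<phi>s R"
      have "\<forall>k\<in>{..<m}. \<exists>b. b \<in> na_atoms (As k) \<and> na_leq (As k) b (R k) \<and> p \<in> \<phi>s k b"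
      proof
        fix k assume "k \<in> {..<m}"
        then have k: "k < m" by simp
        interpret K: sqf "As k" U "\<phi>s k" by (rule sqf.intro[OF S[OF k]])
        have "p \<in> \<phi>s k (R k)" using p lphi k by blast
        then show "\<exists>b. b \<in> na_atoms (As k) \<and> na_leq (As k) b (R k) \<and> p \<in> \<phi>s k b"
          using K.phi_atoms[OF RC[OF R k]] by blast
      qed
      then obtain f where f: "\<forall>k\<in>{..<m}. f k \<in> na_atoms (As k) \<and> na_leq (As k) (f k) (R k) \<and> p \<in> \<phi>s k (f k)"
        by (metis bchoice)
      define B where "B = restrict f {..<m}"
      have atC: "\<And>k. k < m \<Longrightarrow> f k \<in> na_carrier (As k)"
        using f unfolding na_atoms_def by auto
      have "m_basic m As B" unfolding m_basic_def m_rels_def B_def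
        using f atC by (auto simp: restrict_PiE_iff)
      moreover have "m_leq m As B R" unfolding m_leq_def B_def using f by auto
      moreover have "p \<in> loose_phi m \<phi>s B" unfolding B_def using f lphi by auto
      ultimately show "p \<in> (\<Union>B\<in>{B. m_basic m As B \<and> m_leq m As B R}. loose_phi m \<phi>s B)" by blast
    next
      fix p assume "p \<in> (\<Union>B\<in>{B. m_basic m As B \<and> m_leq m As B R}. loose_phi m \<phi>s B)"
      then obtain B where B: "m_basic m As B" "m_leq m As B R" "p \<in> loose_phi m \<phi>s B" by blast
      have "\<forall>k<m. p \<in> \<phi>s k (R k)"
      proof (intro allI impI)
        fix k assume k: "k < m"
        interpret K: sqf "As k" U "\<phi>s k" by (rule sqf.intro[OF S[OF k]])
        have BC: "B k \<in> na_carrier (As k)" using B(1) k unfolding m_basic_def m_rels_def by auto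
        have "\<phi>s k (B k) \<subseteq> \<phi>s k (R k)"
          using K.phi_mono[OF BC RC[OF R k]] B(2) k unfolding m_leq_def by blast
        then show "p \<in> \<phi>s k (R k)" using B(3) lphi k by blast
      qed
      then show "p \<in> loose_phi m \<phi>s R" using lphi by blast
    qed
  qed
  show ?thesis unfolding sequential_formalism_def
    using c1 c2 c3 c4 c5 c6 c7 c8 by blast
qed

end
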